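(* If a series $\sum u_n$ of fuzzy numbers is $E_p$ summable to a fuzzy number $\nu$ and $\sqrt{n}\,D(u_n,\bar{0})=O(1)$, then $\sum u_n\in bs(F)$, i.e. the sequence of partial sums $s_n=\sum_{k=0}^n u_k$ is bounded.
   Context: $E^1$ denotes the space of fuzzy numbers (normal, fuzzy convex, upper semi-continuous fuzzy sets on $\mathbb{R}$ with compact support), with addition and scalar multiplication defined levelwise on $\alpha$-level sets $[u]_\alpha=[u^-_\alpha,u^+_\alpha]$, and metric $D(u,v)=\sup_{\alpha\in[0,1]}\max\{|u^-_\alpha-v^-_\alpha|,|u^+_\alpha-v^+_\alpha|\}$; $\bar{0}$ is the fuzzy number equal to $1$ at $0$ and $0$ elsewhere. For $p>0$, a sequence $(s_n)$ of fuzzy numbers has Euler means $t^p_n=\frac{1}{(p+1)^n}\sum_{k=0}^n\binom{n}{k}p^{n-k}s_k$, and is $E_p$ summable to $\nu$ if $D(t^p_n,\nu)\to 0$. A series $\sum u_n$ of fuzzy numbers is $E_p$ summable to $\nu$ if its sequence of partial sums $s_n=\sum_{k=0}^n u_k$ is $E_p$ summable to $\nu$. $bs(F)$ is the set of series of fuzzy numbers whose partial sums are bounded, i.e. there is $M>0$ with $D(s_n,\bar{0})<M$ for all $n$. *)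

theory Defs
  imports "HOL-Analysis.Analysis"
begin

type_synonym fuzzy = "real \<Rightarrow> real"

definition usc :: "fuzzy \<Rightarrow> bool" where
  "usc u \<longleftrightarrow> (\<forall>a. closed {x. a \<le> u x})"

definition fuzzy_number :: "fuzzy \<Rightarrow> bool" where
  "fuzzy_number u \<longleftrightarrow>
     (\<forall>x. 0 \<le> u x \<and> u x \<le> 1)
   \<and> (\<exists>x. u x = 1)
   \<and> (\<forall>x y l. 0 \<le> l \<and> l \<le> 1 \<longrightarrow> min (u x) (u y) \<le> u (l * x + (1 - l) * y))
   \<and> usc u
   \<and> compact (closure {x. 0 < u x})"

definition flevel :: "fuzzy \<Rightarrow> real \<Rightarrow> real set" where
  "flevel u a = (if a = 0 then closure {x. 0 < u x} else {x. a \<le> u x})"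

definition flower :: "fuzzy \<Rightarrow> real \<Rightarrow> real" where
  "flower u a = Inf (flevel u a)"

definition fupper :: "fuzzy \<Rightarrow> real \<Rightarrow> real" where
  "fupper u a = Sup (flevel u a)"

text \<open>The fuzzy set whose alpha-levels (alpha in (0,1]) are the sets L alpha.\<close>
definition from_levels :: "(real \<Rightarrow> real set) \<Rightarrow> fuzzy" where
  "from_levels L = (\<lambda>x. Sup ({0} \<union> {a. 0 < a \<and> a \<le> 1 \<and> x \<in> L a}))"

definition fadd :: "fuzzy \<Rightarrow> fuzzy \<Rightarrow> fuzzy" where
  "fadd u v = from_levels (\<lambda>a. {y + z | y z. y \<in> flevel u a \<and> z \<in> flevel v a})"

definition fscale :: "real \<Rightarrow> fuzzy \<Rightarrow> fuzzy" where
  "fscale c u = from_levels (\<lambda>a. (\<lambda>y. c * y) ` flevel u a)"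

definition fzero :: fuzzy where
  "fzero = (\<lambda>x. if x = 0 then 1 else 0)"

definition fdist :: "fuzzy \<Rightarrow> fuzzy \<Rightarrow> real" where
  "fdist u v = (SUP a\<in>{0..1}. max \<bar>flower u a - flower v a\<bar> \<bar>fupper u a - fupper v a\<bar>)"

fun fsum :: "(nat \<Rightarrow> fuzzy) \<Rightarrow> nat \<Rightarrow> fuzzy" where
  "fsum f 0 = f 0"
| "fsum f (Suc n) = fadd (fsum f n) (f (Suc n))"

definition euler_mean :: "real \<Rightarrow> (nat \<Rightarrow> fuzzy) \<Rightarrow> nat \<Rightarrow> fuzzy" where
  "euler_mean p s n = fsum (\<lambda>k. fscale (real (n choose k) * p ^ (n - k) / (p + 1) ^ n) (s k)) n"

definition Ep_summable_seq :: "real \<Rightarrow> (nat \<Rightarrow> fuzzy) \<Rightarrow> fuzzy \<Rightarrow> bool" where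
  "Ep_summable_seq p s \<nu> \<longleftrightarrow> (\<lambda>n. fdist (euler_mean p s n) \<nu>) \<longlonglongrightarrow> 0"

definition Ep_summable_series :: "real \<Rightarrow> (nat \<Rightarrow> fuzzy) \<Rightarrow> fuzzy \<Rightarrow> bool" where
  "Ep_summable_series p u \<nu> \<longleftrightarrow> Ep_summable_seq p (fsum u) \<nu>"

definition bs_F :: "(nat \<Rightarrow> fuzzy) \<Rightarrow> bool" where
  "bs_F u \<longleftrightarrow> (\<exists>M>0. \<forall>n. fdist (fsum u n) fzero < M)"

end

theory Submission
  imports Defs
begin


lemma binom_m0:
  fixes q r :: real assumes "q + r = 1"
  shows "(\<Sum>k\<le>n. real (n choose k) * q^k * r^(n-k)) = 1"
  using binomial_ring[of q r n] assms by (simp add: mult.commute mult.left_commute)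

lemma binom_m1:
  fixes q r :: real assumes "q + r = 1"
  shows "(\<Sum>k\<le>n. real k * (real (n choose k) * q^k * r^(n-k))) = real n * q"
proof (cases n)
  case 0 then show ?thesis by simp
next
  case (Suc m)
  have "(\<Sum>k\<le>Suc m. real k * (real (Suc m choose k) * q^k * r^(Suc m-k)))
      = (\<Sum>k\<le>m. real (Suc k) * (real (Suc m choose Suc k) * q^Suc k * r^(m-k)))"
    by (subst sum.atMost_Suc_shift) simp
  also have "\<dots> = (\<Sum>k\<le>m. real (Suc m) * q * (real (m choose k) * q^k * r^(m-k)))"
  proof (rule sum.cong[OF refl])
    fix k assume "k \<in> {..m}"
    have eq: "real (Suc m choose Suc k) * real (Suc k) = real (Suc m) * real (m choose k)"
      using Suc_times_binomial_eq[of m k] by (metis of_nat_mult)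
    have "real (Suc k) * (real (Suc m choose Suc k) * q^Suc k * r^(m-k)) = (real (Suc m choose Suc k) * real (Suc k)) * (q * q^k * r^(m-k))"
      by (simp add: algebra_simps del: binomial_Suc_Suc of_nat_Suc)
    also have "\<dots> = (real (Suc m) * real (m choose k)) * (q * q^k * r^(m-k))" by (simp only: eq)
    finally show "real (Suc k) * (real (Suc m choose Suc k) * q^Suc k * r^(m-k)) = real (Suc m) * q * (real (m choose k) * q^k * r^(m-k))"
      by (simp add: algebra_simps del: binomial_Suc_Suc of_nat_Suc)
  qed
  also have "\<dots> = real (Suc m) * q" by (simp add: sum_distrib_left[symmetric] binom_m0[OF assms])
  finally show ?thesis using Suc by simp
qed

lemma binom_m2:
  fixes q r :: real assumes "q + r = 1"
  shows "(\<Sum>k\<le>n. (real k)^2 * (real (n choose k) * q^k * r^(n-k))) = real n * q * ((real n - 1) * q + 1)"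
proof (cases n)
  case 0 then show ?thesis by simp
next
  case (Suc m)
  have "(\<Sum>k\<le>Suc m. (real k)^2 * (real (Suc m choose k) * q^k * r^(Suc m-k)))
      = (\<Sum>k\<le>m. (real (Suc k))^2 * (real (Suc m choose Suc k) * q^Suc k * r^(m-k)))"
    by (subst sum.atMost_Suc_shift) simp
  also have "\<dots> = (\<Sum>k\<le>m. real (Suc m) * q * ((real k + 1) * (real (m choose k) * q^k * r^(m-k))))"
  proof (rule sum.cong[OF refl])
    fix k assume "k \<in> {..m}"
    have eq: "real (Suc m choose Suc k) * real (Suc k) = real (Suc m) * real (m choose k)"
      using Suc_times_binomial_eq[of m k] by (metis of_nat_mult)
    have "(real (Suc k))^2 * (real (Suc m choose Suc k) * q^Suc k * r^(m-k)) = (real (Suc m choose Suc k) * real (Suc k)) * (real (Suc k) * q * q^k * r^(m-k))"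
      by (simp add: algebra_simps power2_eq_square del: binomial_Suc_Suc of_nat_Suc)
    also have "\<dots> = (real (Suc m) * real (m choose k)) * (real (Suc k) * q * q^k * r^(m-k))" by (simp only: eq)
    finally show "(real (Suc k))^2 * (real (Suc m choose Suc k) * q^Suc k * r^(m-k)) = real (Suc m) * q * ((real k + 1) * (real (m choose k) * q^k * r^(m-k)))"
      by (simp add: algebra_simps del: binomial_Suc_Suc)
  qed
  also have "\<dots> = real (Suc m) * q * (real m * q + 1)"
    by (simp add: sum_distrib_left[symmetric] distrib_right sum.distrib binom_m0[OF assms] binom_m1[OF assms])
  finally show ?thesis using Suc by simp
qed

lemma sqrt_step: "1 / sqrt (real (Suc m)) \<le> 2 * (sqrt (real (Suc m)) - sqrt (real m))"
proof -
  define a where "a = sqrt (real (Suc m))"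
  define b where "b = sqrt (real m)"
  have a0: "a > 0" unfolding a_def by simp
  have b0: "b \<ge> 0" unfolding b_def by simp
  have aa: "a^2 = real m + 1" unfolding a_def by simp
  have bb: "b^2 = real m" unfolding b_def by simp
  have "0 \<le> (a - b)^2" by simp
  moreover have "(a - b)^2 = a^2 - 2*(a*b) + b^2" by (simp add: power2_eq_square algebra_simps)
  moreover have "2 * a * (a - b) = 2 * a^2 - 2 * (a*b)" by (simp add: power2_eq_square algebra_simps)
  ultimately have "1 \<le> 2 * a * (a - b)"
    using aa bb by linarith
  then show ?thesis using a0 unfolding a_def[symmetric] b_def[symmetric]
    by (simp add: divide_le_eq mult.commute mult.left_commute)
qed

lemma partial_diff:
  fixes x :: "nat \<Rightarrow> real"
  assumes xk: "\<And>k. k \<ge> 1 \<Longrightarrow> \<bar>x k\<bar> \<le> C / sqrt (real k)" and C: "C \<ge> 0" and km: "k \<le> m"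
  shows "\<bar>(\<Sum>j\<le>m. x j) - (\<Sum>j\<le>k. x j)\<bar> \<le> 2 * C * (sqrt (real m) - sqrt (real k))"
  using km
proof (induction m rule: dec_induct)
  case base then show ?case by simp
next
  case (step m)
  have "\<bar>x (Suc m)\<bar> \<le> C / sqrt (real (Suc m))" using xk[of "Suc m"] by simp
  also have "\<dots> = C * (1 / sqrt (real (Suc m)))" by simp
  also have "\<dots> \<le> C * (2 * (sqrt (real (Suc m)) - sqrt (real m)))"
    using sqrt_step[of m] C by (rule mult_left_mono)
  finally have h: "\<bar>x (Suc m)\<bar> \<le> 2 * C * (sqrt (real (Suc m)) - sqrt (real m))" by (simp add: algebra_simps)
  have "\<bar>(\<Sum>j\<le>Suc m. x j) - (\<Sum>j\<le>k. x j)\<bar> \<le> \<bar>(\<Sum>j\<le>m. x j) - (\<Sum>j\<le>k. x j)\<bar> + \<bar>x (Suc m)\<bar>"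
    by simp
  also have "\<dots> \<le> 2 * C * (sqrt (real m) - sqrt (real k)) + 2 * C * (sqrt (real (Suc m)) - sqrt (real m))"
    using step.IH h by linarith
  finally show ?case by (simp add: algebra_simps)
qed

lemma sqrt_diff_bound:
  assumes "m \<ge> 1"
  shows "2 * \<bar>sqrt (real m) - sqrt (real k)\<bar> \<le> 1 + (real m - real k)^2 / real m"
proof -
  define a where "a = sqrt (real m)"
  define b where "b = sqrt (real k)"
  have a0: "a > 0" unfolding a_def using assms by simp
  have b0: "b \<ge> 0" unfolding b_def by simp
  have aa: "a^2 = real m" unfolding a_def by simp
  have bb: "b^2 = real k" unfolding b_def by simp
  have e: "(real m - real k)^2 / real m = (a - b)^2 * ((a + b)^2 / a^2)"
    using a0 by (simp add: aa[symmetric] bb[symmetric] field_simps power2_eq_square)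
  have "(a + b)^2 / a^2 \<ge> 1" using a0 b0 by (simp add: power_mono)
  then have "(a - b)^2 * ((a + b)^2 / a^2) \<ge> (a - b)^2"
    by (metis mult_left_mono mult.right_neutral zero_le_power2)
  moreover have "2 * \<bar>a - b\<bar> \<le> 1 + (a - b)^2"
  proof -
    have "0 \<le> (\<bar>a - b\<bar> - 1)^2" by simp
    moreover have "(\<bar>a - b\<bar> - 1)^2 = \<bar>a - b\<bar>^2 - 2 * \<bar>a - b\<bar> + 1"
      by (simp only: power2_diff) simp
    moreover have "\<bar>a - b\<bar>^2 = (a - b)^2" by simp
    ultimately show ?thesis by linarith
  qed
  ultimately show ?thesis unfolding e a_def[symmetric] b_def[symmetric] by linarith
qed

lemma sqrt_le_nat: "sqrt (real m) \<le> real m"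
proof (cases "m = 0")
  case False
  then have "real m \<le> real m * real m" by simp
  then have "sqrt (real m) \<le> sqrt (real m * real m)" by (rule real_sqrt_le_mono)
  then show ?thesis by simp
qed simp

lemma real_core:
  fixes x :: "nat \<Rightarrow> real" and p C A D0 :: real and N m :: nat
  assumes p: "p > 0" and C: "C \<ge> 0"
   and xk: "\<And>k. k \<ge> 1 \<Longrightarrow> \<bar>x k\<bar> \<le> C / sqrt (real k)"
   and x0: "\<bar>x 0\<bar> \<le> D0"
   and T: "\<And>n. n \<ge> N \<Longrightarrow> \<bar>\<Sum>k\<le>n. real (n choose k) * p^(n-k) / (p+1)^n * (\<Sum>j\<le>k. x j)\<bar> \<le> A"
  shows "\<bar>\<Sum>j\<le>m. x j\<bar> \<le> A + 3*C + D0 + 2*C*real N"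
proof -
  define S where "S m = (\<Sum>j\<le>m. x j)" for m
  have A0: "A \<ge> 0" using T[of N] by linarith
  have D00: "D0 \<ge> 0" using x0 by linarith
  have Sdiff: "\<bar>S m - S k\<bar> \<le> 2 * C * \<bar>sqrt (real m) - sqrt (real k)\<bar>" for m k
  proof (cases "k \<le> m")
    case True
    then show ?thesis using partial_diff[OF xk C True] unfolding S_def by simp
  next
    case False
    then have "m \<le> k" by simp
    from partial_diff[OF xk C this] have "\<bar>S k - S m\<bar> \<le> 2 * C * (sqrt (real k) - sqrt (real m))" unfolding S_def .
    moreover have "2 * C * (sqrt (real k) - sqrt (real m)) \<le> 2 * C * \<bar>sqrt (real m) - sqrt (real k)\<bar>"
      using C by (intro mult_left_mono) auto
    ultimately show ?thesis by (simp add: abs_minus_commute)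
  qed
  show ?thesis
  proof (cases "m < N \<or> m = 0")
    case True
    have "\<bar>S m - S 0\<bar> \<le> 2 * C * sqrt (real m)" using Sdiff[of m 0] by simp
    moreover have "sqrt (real m) \<le> real N" using True sqrt_le_nat[of m] by auto
    then have "2 * C * sqrt (real m) \<le> 2 * C * real N" using C by (simp add: mult_left_mono)
    moreover have "S 0 = x 0" unfolding S_def by simp
    ultimately have "\<bar>S m\<bar> \<le> D0 + 2 * C * real N" using x0 by linarith
    then show ?thesis unfolding S_def using A0 C by linarith
  next
    case False
    then have mN: "N \<le> m" and m1: "m \<ge> 1" by auto
    define q where "q = 1 / (p + 1)"
    define r where "r = p / (p + 1)"
    have qr: "q + r = 1" unfolding q_def r_def using p by (simp add: field_simps)
    have q0: "q > 0" and q1: "q \<le> 1" unfolding q_def using p by auto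
    define n where "n = nat \<lfloor>real m * (p + 1)\<rfloor>"
    have mp0: "real m * (p + 1) \<ge> 0" using p by simp
    have n1: "real n \<le> real m * (p + 1)" unfolding n_def using mp0 by simp
    have n2: "real m * (p + 1) < real n + 1" unfolding n_def using mp0 by linarith
    have "0 \<le> real m * p" using p by simp
    then have "real m \<le> real m * (p + 1)" by (simp add: distrib_left)
    then have "int m \<le> \<lfloor>real m * (p + 1)\<rfloor>" by (simp add: le_floor_iff)
    then have nm: "m \<le> n" unfolding n_def by simp
    have nq1: "real n * q \<le> real m" using n1 p unfolding q_def by (simp add: field_simps)
    have nq2: "real m < real n * q + q" using n2 p unfolding q_def by (simp add: field_simps)
    define w where "w k = real (n choose k) * q^k * r^(n-k)" for k
    have wpos: "w k \<ge> 0" for k unfolding w_def q_def r_def using p by simp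
    have wform: "real (n choose k) * p^(n-k) / (p+1)^n = w k" if "k \<le> n" for k
    proof -
      have "(p+1)^n = (p+1)^k * (p+1)^(n-k)" using that by (simp add: power_add[symmetric])
      then show ?thesis unfolding w_def q_def r_def using p by (simp add: power_divide)
    qed
    have Tn: "\<bar>\<Sum>k\<le>n. w k * S k\<bar> \<le> A"
      using T[of n] mN nm wform unfolding S_def by simp
    have sw: "(\<Sum>k\<le>n. w k) = 1" using binom_m0[OF qr, of n] unfolding w_def by simp
    have sw1: "(\<Sum>k\<le>n. real k * w k) = real n * q" using binom_m1[OF qr, of n] unfolding w_def by simp
    have sw2: "(\<Sum>k\<le>n. (real k)^2 * w k) = real n * q * ((real n - 1) * q + 1)"
      using binom_m2[OF qr, of n] unfolding w_def by simp
    have "S m - (\<Sum>k\<le>n. w k * S k) = (\<Sum>k\<le>n. w k * (S m - S k))"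
      using sw by (simp add: algebra_simps sum_subtractf sum_distrib_left[symmetric] sum_distrib_right[symmetric])
    also have "\<bar>\<dots>\<bar> \<le> (\<Sum>k\<le>n. w k * \<bar>S m - S k\<bar>)"
      by (rule order_trans[OF sum_abs]) (simp add: abs_mult wpos)
    also have "\<dots> \<le> (\<Sum>k\<le>n. w k * (C * (1 + (real m - real k)^2 / real m)))"
    proof (rule sum_mono)
      fix k
      have "\<bar>S m - S k\<bar> \<le> C * (2 * \<bar>sqrt (real m) - sqrt (real k)\<bar>)" using Sdiff[of m k] by simp
      also have "\<dots> \<le> C * (1 + (real m - real k)^2 / real m)"
        using sqrt_diff_bound[OF m1, of k] C by (rule mult_left_mono)
      finally show "w k * \<bar>S m - S k\<bar> \<le> w k * (C * (1 + (real m - real k)^2 / real m))"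
        using wpos by (rule mult_left_mono)
    qed
    also have "\<dots> = C * (1 + (\<Sum>k\<le>n. w k * (real m - real k)^2) / real m)"
      using sw by (simp add: algebra_simps sum.distrib sum_distrib_left[symmetric] sum_divide_distrib[symmetric])
    also have "(\<Sum>k\<le>n. w k * (real m - real k)^2) = (real m)^2 * (\<Sum>k\<le>n. w k) - 2 * real m * (\<Sum>k\<le>n. real k * w k) + (\<Sum>k\<le>n. (real k)^2 * w k)"
      by (simp add: power2_diff algebra_simps sum.distrib sum_subtractf sum_distrib_left sum_distrib_right)
    also have "\<dots> = (real m - real n * q)^2 + real n * q * (1 - q)"
      unfolding sw sw1 sw2 by (simp add: power2_diff algebra_simps power2_eq_square)
    also have "\<dots> \<le> 1 + real m"
    proof -
      have "(real m - real n * q)^2 \<le> 1"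
        using nq1 nq2 q1 by (simp add: abs_le_square_iff[symmetric] power_le_one_iff) 
      moreover have "real n * q * (1 - q) \<le> real m"
        using nq1 q0 q1 by (smt (verit) mult_left_le mult_nonneg_nonneg of_nat_0_le_iff)
      ultimately show ?thesis by linarith
    qed
    finally have "\<bar>S m - (\<Sum>k\<le>n. w k * S k)\<bar> \<le> C * (1 + (1 + real m) / real m)"
      using C m1 by (smt (verit) divide_right_mono mult_left_mono of_nat_0_le_iff)
    also have "\<dots> \<le> C * 3"
      using C m1 by (intro mult_left_mono) (auto simp: field_simps)
    finally have "\<bar>S m\<bar> \<le> A + 3 * C" using Tn by linarith
    moreover have "0 \<le> 2 * C * real N" using C by simp
    ultimately show ?thesis unfolding S_def using D00 C by linarith
  qed
qed



definition good :: "fuzzy \<Rightarrow> bool" where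
  "good w \<longleftrightarrow> (\<forall>a. 0 < a \<and> a \<le> 1 \<longrightarrow> flevel w a = {flower w a..fupper w a} \<and> flower w a \<le> fupper w a)"

lemma flevel_pos: "0 < a \<Longrightarrow> flevel w a = {x. a \<le> w x}"
  unfolding flevel_def by simp

lemma goodD: "good w \<Longrightarrow> 0 < a \<Longrightarrow> a \<le> 1 \<Longrightarrow> flevel w a = {flower w a..fupper w a} \<and> flower w a \<le> fupper w a"
  unfolding good_def by blast

lemma good_mono:
  assumes g: "good w" and b: "0 < b" "b \<le> s" "s \<le> 1"
  shows "flower w b \<le> flower w s \<and> fupper w s \<le> fupper w b"
proof -
  have "flevel w s \<subseteq> flevel w b" using b by (auto simp: flevel_pos)
  moreover have "flevel w s = {flower w s..fupper w s}" "flower w s \<le> fupper w s"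
    using goodD[OF g, of s] b by auto
  moreover have "flevel w b = {flower w b..fupper w b}"
    using goodD[OF g, of b] b by auto
  ultimately show ?thesis by auto
qed

lemma level_lim:
  fixes a t :: real
  assumes "\<And>b. 0 < b \<Longrightarrow> b < a \<Longrightarrow> b \<le> t" and "0 < a"
  shows "a \<le> t"
proof (rule ccontr)
  assume "\<not> a \<le> t"
  then have "t < a" by simp
  define b where "b = max (a/2) ((t + a)/2)"
  have "0 < b" "b < a" "t < b" using \<open>t < a\<close> \<open>0 < a\<close> unfolding b_def by (auto simp: max_def)
  with assms(1)[of b] show False by simp
qed

lemma good_lc:
  assumes g: "good w" and a: "0 < a" "a \<le> 1" and e: "e > 0"
  shows "\<exists>b. 0 < b \<and> b < a \<and> flower w a - e < flower w b \<and> fupper w b < fupper w a + e"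
proof -
  have ga: "flevel w a = {flower w a..fupper w a}" "flower w a \<le> fupper w a"
    using goodD[OF g] a by auto
  have "\<exists>b1. 0 < b1 \<and> b1 < a \<and> flower w a - e < flower w b1"
  proof (rule ccontr)
    assume H: "\<not> ?thesis"
    define y where "y = flower w a - e"
    have "b \<le> w y" if "0 < b" "b < a" for b
    proof -
      have "flower w b \<le> y" using H that unfolding y_def by force
      moreover have "y \<le> fupper w b"
        using good_mono[OF g, of b a] that a ga(2) e unfolding y_def by linarith
      moreover have "flevel w b = {flower w b..fupper w b}" using goodD[OF g, of b] that a by auto
      ultimately have "y \<in> flevel w b" by auto
      then show ?thesis using that by (simp add: flevel_pos)
    qed
    then have "a \<le> w y" using level_lim a by blast
    then have "y \<in> flevel w a" using a by (simp add: flevel_pos)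
    then show False using ga e unfolding y_def by auto
  qed
  then obtain b1 where b1: "0 < b1" "b1 < a" "flower w a - e < flower w b1" by blast
  have "\<exists>b2. 0 < b2 \<and> b2 < a \<and> fupper w b2 < fupper w a + e"
  proof (rule ccontr)
    assume H: "\<not> ?thesis"
    define y where "y = fupper w a + e"
    have "b \<le> w y" if "0 < b" "b < a" for b
    proof -
      have "y \<le> fupper w b" using H that unfolding y_def by force
      moreover have "flower w b \<le> y"
        using good_mono[OF g, of b a] that a ga(2) e unfolding y_def by linarith
      moreover have "flevel w b = {flower w b..fupper w b}" using goodD[OF g, of b] that a by auto
      ultimately have "y \<in> flevel w b" by auto
      then show ?thesis using that by (simp add: flevel_pos)
    qed
    then have "a \<le> w y" using level_lim a by blast
    then have "y \<in> flevel w a" using a by (simp add: flevel_pos)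
    then show False using ga e unfolding y_def by auto
  qed
  then obtain b2 where b2: "0 < b2" "b2 < a" "fupper w b2 < fupper w a + e" by blast
  define b where "b = max b1 b2"
  have "flower w b1 \<le> flower w b" "fupper w b \<le> fupper w b2"
    using good_mono[OF g, of b1 b] good_mono[OF g, of b2 b] b1 b2 a unfolding b_def by auto
  then show ?thesis using b1 b2 unfolding b_def
    by (intro exI[of _ "max b1 b2"]) auto
qed

lemma from_levels_level:
  fixes L :: "real \<Rightarrow> real set" and l r :: "real \<Rightarrow> real"
  assumes lm: "\<And>b s. 0 < b \<Longrightarrow> b \<le> s \<Longrightarrow> s \<le> 1 \<Longrightarrow> l b \<le> l s \<and> r s \<le> r b"
    and lc: "\<And>a e. 0 < a \<Longrightarrow> a \<le> 1 \<Longrightarrow> e > 0 \<Longrightarrow> \<exists>b. 0 < b \<and> b < a \<and> l a - e < l b \<and> r b < r a + e"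
    and L: "\<And>b. 0 < b \<Longrightarrow> b \<le> 1 \<Longrightarrow> L b = {l b..r b}"
    and a: "0 < a" "a \<le> 1"
  shows "flevel (from_levels L) a = {l a..r a}"
proof -
  have *: "a \<le> from_levels L x \<longleftrightarrow> x \<in> {l a..r a}" for x
  proof -
    define S where "S = {0} \<union> {b. 0 < b \<and> b \<le> 1 \<and> x \<in> L b}"
    have Sne: "S \<noteq> {}" unfolding S_def by blast
    have Sbdd: "bdd_above S" unfolding S_def by (rule bdd_aboveI[of _ 1]) auto
    have fl: "from_levels L x = Sup S" unfolding from_levels_def S_def by simp
    show ?thesis
    proof
      assume "a \<le> from_levels L x"
      then have aS: "a \<le> Sup S" using fl by simp
      have inb: "l b \<le> x \<and> x \<le> r b" if "0 < b" "b < a" for b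
      proof -
        have "b < Sup S" using aS that by linarith
        then obtain s where s: "s \<in> S" "b < s" using less_cSup_iff[OF Sne Sbdd] by blast
        then have s1: "0 < s" "s \<le> 1" "x \<in> L s" using that unfolding S_def by auto
        then have "x \<in> {l s..r s}" using L by auto
        moreover have "l b \<le> l s \<and> r s \<le> r b" using lm[of b s] that s1 s by auto
        ultimately show ?thesis by auto
      qed
      have "l a \<le> x"
      proof (rule ccontr)
        assume "\<not> l a \<le> x"
        then obtain b where "0 < b" "b < a" "l a - (l a - x) < l b" using lc[of a "l a - x"] a by auto
        with inb[of b] show False by auto
      qed
      moreover have "x \<le> r a"
      proof (rule ccontr)
        assume "\<not> x \<le> r a"
        then obtain b where "0 < b" "b < a" "r b < r a + (x - r a)" using lc[of a "x - r a"] a by auto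
        with inb[of b] show False by auto
      qed
      ultimately show "x \<in> {l a..r a}" by auto
    next
      assume "x \<in> {l a..r a}"
      then have "a \<in> S" using L a unfolding S_def by auto
      then show "a \<le> from_levels L x" using fl cSup_upper[OF _ Sbdd] by simp
    qed
  qed
  show ?thesis using a(1) * by (simp add: flevel_pos set_eq_iff)
qed

lemma from_levels_good:
  fixes L :: "real \<Rightarrow> real set" and l r :: "real \<Rightarrow> real"
  assumes lm: "\<And>b s. 0 < b \<Longrightarrow> b \<le> s \<Longrightarrow> s \<le> 1 \<Longrightarrow> l b \<le> l s \<and> r s \<le> r b"
    and lc: "\<And>a e. 0 < a \<Longrightarrow> a \<le> 1 \<Longrightarrow> e > 0 \<Longrightarrow> \<exists>b. 0 < b \<and> b < a \<and> l a - e < l b \<and> r b < r a + e"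
    and L: "\<And>b. 0 < b \<Longrightarrow> b \<le> 1 \<Longrightarrow> L b = {l b..r b}"
    and lr: "\<And>b. 0 < b \<Longrightarrow> b \<le> 1 \<Longrightarrow> l b \<le> r b"
  shows "good (from_levels L) \<and> (\<forall>a. 0 < a \<and> a \<le> 1 \<longrightarrow> flower (from_levels L) a = l a \<and> fupper (from_levels L) a = r a)"
proof -
  have *: "flower (from_levels L) a = l a \<and> fupper (from_levels L) a = r a" if "0 < a" "a \<le> 1" for a
    using from_levels_level[OF lm lc L that] lr[OF that] unfolding flower_def fupper_def by simp
  show ?thesis unfolding good_def using * from_levels_level[OF lm lc L] lr by auto
qed

lemma minkowski_interval:
  fixes a b c d :: real assumes "a \<le> b" "c \<le> d"
  shows "{y + z | y z. y \<in> {a..b} \<and> z \<in> {c..d}} = {a + c..b + d}"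
proof
  show "{a + c..b + d} \<subseteq> {y + z | y z. y \<in> {a..b} \<and> z \<in> {c..d}}"
  proof
    fix x assume x: "x \<in> {a + c..b + d}"
    define y where "y = max a (x - d)"
    have "y \<in> {a..b}" "x - y \<in> {c..d}" using x assms unfolding y_def by auto
    then show "x \<in> {y + z | y z. y \<in> {a..b} \<and> z \<in> {c..d}}" by force
  qed
qed auto

lemma good_fadd:
  assumes gu: "good u" and gv: "good v"
  shows "good (fadd u v) \<and> (\<forall>a. 0 < a \<and> a \<le> 1 \<longrightarrow> flower (fadd u v) a = flower u a + flower v a \<and> fupper (fadd u v) a = fupper u a + fupper v a)"
  unfolding fadd_def
proof (rule from_levels_good)
  fix b s :: real assume "0 < b" "b \<le> s" "s \<le> 1"
  then show "flower u b + flower v b \<le> flower u s + flower v s \<and> fupper u s + fupper v s \<le> fupper u b + fupper v b"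
    using good_mono[OF gu] good_mono[OF gv] by (meson add_mono)
next
  fix a e :: real assume a: "0 < a" "a \<le> 1" and e: "e > 0"
  obtain b1 where b1: "0 < b1" "b1 < a" "flower u a - e/2 < flower u b1" "fupper u b1 < fupper u a + e/2"
    using good_lc[OF gu a, of "e/2"] e by auto
  obtain b2 where b2: "0 < b2" "b2 < a" "flower v a - e/2 < flower v b2" "fupper v b2 < fupper v a + e/2"
    using good_lc[OF gv a, of "e/2"] e by auto
  define b where "b = max b1 b2"
  have "flower u b1 \<le> flower u b" "fupper u b \<le> fupper u b1"
    using good_mono[OF gu, of b1 b] b1 b2 a unfolding b_def by auto
  moreover have "flower v b2 \<le> flower v b" "fupper v b \<le> fupper v b2"
    using good_mono[OF gv, of b2 b] b1 b2 a unfolding b_def by auto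
  ultimately show "\<exists>b. 0 < b \<and> b < a \<and> flower u a + flower v a - e < flower u b + flower v b \<and> fupper u b + fupper v b < fupper u a + fupper v a + e"
    using b1 b2 unfolding b_def by (intro exI[of _ "max b1 b2"]) auto
next
  fix b :: real assume b: "0 < b" "b \<le> 1"
  show "{y + z |y z. y \<in> flevel u b \<and> z \<in> flevel v b} = {flower u b + flower v b..fupper u b + fupper v b}"
    using goodD[OF gu b] goodD[OF gv b] minkowski_interval by simp
  show "flower u b + flower v b \<le> fupper u b + fupper v b"
    using goodD[OF gu b] goodD[OF gv b] by simp
qed

lemma good_fscale:
  assumes g: "good w" and c: "c > 0"
  shows "good (fscale c w) \<and> (\<forall>a. 0 < a \<and> a \<le> 1 \<longrightarrow> flower (fscale c w) a = c * flower w a \<and> fupper (fscale c w) a = c * fupper w a)"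
  unfolding fscale_def
proof (rule from_levels_good)
  fix b s :: real assume "0 < b" "b \<le> s" "s \<le> 1"
  then show "c * flower w b \<le> c * flower w s \<and> c * fupper w s \<le> c * fupper w b"
    using good_mono[OF g] c by simp
next
  fix a e :: real assume a: "0 < a" "a \<le> 1" and e: "e > 0"
  obtain b where b: "0 < b" "b < a" "flower w a - e/c < flower w b" "fupper w b < fupper w a + e/c"
    using good_lc[OF g a, of "e/c"] e c by auto
  have "c * flower w a - e < c * flower w b" "c * fupper w b < c * fupper w a + e"
    using b(3,4) c by (simp_all add: field_simps)
  then show "\<exists>b. 0 < b \<and> b < a \<and> c * flower w a - e < c * flower w b \<and> c * fupper w b < c * fupper w a + e"
    using b by blast
next
  fix b :: real assume b: "0 < b" "b \<le> 1"
  show "(\<lambda>y. c * y) ` flevel w b = {c * flower w b..c * fupper w b}"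
    using goodD[OF g b] c by simp
  show "c * flower w b \<le> c * fupper w b"
    using goodD[OF g b] c by simp
qed



lemma good_fuzzy:
  assumes fu: "fuzzy_number u"
  shows "good u \<and> (\<exists>B. \<forall>a. 0 < a \<and> a \<le> 1 \<longrightarrow> \<bar>flower u a\<bar> \<le> B \<and> \<bar>fupper u a\<bar> \<le> B)"
proof -
  have conv: "\<And>x y l. 0 \<le> l \<and> l \<le> 1 \<Longrightarrow> min (u x) (u y) \<le> u (l * x + (1 - l) * y)"
    and us: "usc u" and cp: "compact (closure {x. 0 < u x})" and ex1: "\<exists>x. u x = 1"
    using fu unfolding fuzzy_number_def by blast+
  obtain x1 where x1: "u x1 = 1" using ex1 by blast
  have "bounded (closure {x. 0 < u x})" using cp by (rule compact_imp_bounded)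
  then obtain B where B: "\<And>x. x \<in> closure {x. 0 < u x} \<Longrightarrow> \<bar>x\<bar> \<le> B"
    unfolding bounded_real by blast
  have main: "flevel u a = {flower u a..fupper u a} \<and> flower u a \<le> fupper u a \<and> \<bar>flower u a\<bar> \<le> B \<and> \<bar>fupper u a\<bar> \<le> B"
    if a: "0 < a" "a \<le> 1" for a
  proof -
    define S where "S = {x. a \<le> u x}"
    have lev: "flevel u a = S" using a unfolding S_def by (simp add: flevel_pos)
    have cl: "closed S" using us unfolding usc_def S_def by blast
    have sub: "S \<subseteq> closure {x. 0 < u x}"
      unfolding S_def using a by (auto intro: closure_subset[THEN subsetD])
    have bd: "bounded S" using bounded_subset[OF \<open>bounded (closure {x. 0 < u x})\<close> sub] .
    have bb: "bdd_below S" "bdd_above S" using bd by (auto intro: bounded_imp_bdd_below bounded_imp_bdd_above)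
    have "x1 \<in> S" using x1 a unfolding S_def by simp
    then have ne: "S \<noteq> {}" by blast
    have iS: "Inf S \<in> S" using closed_contains_Inf[OF ne bb(1) cl] .
    have sS: "Sup S \<in> S" using closed_contains_Sup[OF ne bb(2) cl] .
    have eq: "S = {Inf S..Sup S}"
    proof
      show "S \<subseteq> {Inf S..Sup S}" using bb by (auto intro: cInf_lower cSup_upper)
      show "{Inf S..Sup S} \<subseteq> S"
      proof
        fix y assume y: "y \<in> {Inf S..Sup S}"
        show "y \<in> S"
        proof (cases "Inf S = Sup S")
          case True then show ?thesis using y iS by auto
        next
          case False
          then have lt: "Inf S < Sup S" using y by auto
          define l where "l = (Sup S - y) / (Sup S - Inf S)"
          have l01: "0 \<le> l \<and> l \<le> 1" using y lt unfolding l_def by (auto simp: field_simps)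
          have "l * (Sup S - Inf S) = Sup S - y" using lt unfolding l_def by simp
          moreover have "l * Inf S + (1 - l) * Sup S = Sup S - l * (Sup S - Inf S)" by (simp add: algebra_simps)
          ultimately have yl: "l * Inf S + (1 - l) * Sup S = y" by simp
          have "min (u (Inf S)) (u (Sup S)) \<le> u y" using conv[OF l01, of "Inf S" "Sup S"] yl by simp
          moreover have "a \<le> u (Inf S)" "a \<le> u (Sup S)" using iS sS unfolding S_def by auto
          ultimately show ?thesis unfolding S_def by simp
        qed
      qed
    qed
    have "flower u a = Inf S" "fupper u a = Sup S" unfolding flower_def fupper_def lev by auto
    moreover have "Inf S \<le> Sup S" using iS bb by (auto intro: cSup_upper)
    moreover have "\<bar>Inf S\<bar> \<le> B" "\<bar>Sup S\<bar> \<le> B" using iS sS sub B by auto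
    ultimately show ?thesis using lev eq by simp
  qed
  show ?thesis unfolding good_def using main by blast
qed

lemma good_fsum:
  assumes g: "\<And>k. k \<le> n \<Longrightarrow> good (f k)"
  shows "good (fsum f n) \<and> (\<forall>a. 0 < a \<and> a \<le> 1 \<longrightarrow> flower (fsum f n) a = (\<Sum>k\<le>n. flower (f k) a) \<and> fupper (fsum f n) a = (\<Sum>k\<le>n. fupper (f k) a))"
  using g
proof (induction n)
  case 0 then show ?case by simp
next
  case (Suc n)
  have "good (fsum f n) \<and> (\<forall>a. 0 < a \<and> a \<le> 1 \<longrightarrow> flower (fsum f n) a = (\<Sum>k\<le>n. flower (f k) a) \<and> fupper (fsum f n) a = (\<Sum>k\<le>n. fupper (f k) a))"
    using Suc.IH Suc.prems by simp
  then show ?case using good_fadd[of "fsum f n" "f (Suc n)"] Suc.prems by simp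
qed

lemma flevel_fzero: "0 \<le> a \<Longrightarrow> a \<le> 1 \<Longrightarrow> flevel fzero a = {0}"
proof -
  assume a: "0 \<le> a" "a \<le> 1"
  show ?thesis
  proof (cases "a = 0")
    case True
    have "{x. 0 < fzero x} = {0}" unfolding fzero_def by auto
    then show ?thesis using True unfolding flevel_def by simp
  next
    case False
    then have "0 < a" using a by simp
    moreover have "{x. a \<le> fzero x} = {0}" unfolding fzero_def using \<open>0 < a\<close> a by auto
    ultimately show ?thesis by (simp add: flevel_pos)
  qed
qed

lemma fzero_lu: "0 \<le> a \<Longrightarrow> a \<le> 1 \<Longrightarrow> flower fzero a = 0 \<and> fupper fzero a = 0"
  by (simp add: flower_def fupper_def flevel_fzero)

definition fd_fun :: "fuzzy \<Rightarrow> fuzzy \<Rightarrow> real \<Rightarrow> real" where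
  "fd_fun u v a = max \<bar>flower u a - flower v a\<bar> \<bar>fupper u a - fupper v a\<bar>"

lemma fdist_alt: "fdist u v = (SUP a\<in>{0..1}. fd_fun u v a)"
  unfolding fdist_def fd_fun_def by simp

lemma bdd_fdist:
  assumes "\<And>a. 0 < a \<Longrightarrow> a \<le> 1 \<Longrightarrow> \<bar>flower u a\<bar> \<le> B1 \<and> \<bar>fupper u a\<bar> \<le> B1"
    and "\<And>a. 0 < a \<Longrightarrow> a \<le> 1 \<Longrightarrow> \<bar>flower v a\<bar> \<le> B2 \<and> \<bar>fupper v a\<bar> \<le> B2"
  shows "bdd_above (fd_fun u v ` {0..1})"
proof (rule bdd_aboveI[of _ "max (B1 + B2) (fd_fun u v 0)"])
  fix y assume "y \<in> fd_fun u v ` {0..1}"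
  then obtain a where a: "a \<in> {0..1}" "y = fd_fun u v a" by blast
  show "y \<le> max (B1 + B2) (fd_fun u v 0)"
  proof (cases "a = 0")
    case True then show ?thesis using a by simp
  next
    case False
    then have "0 < a" "a \<le> 1" using a by auto
    then have "fd_fun u v a \<le> B1 + B2" using assms[OF \<open>0 < a\<close> \<open>a \<le> 1\<close>] unfolding fd_fun_def by auto
    then show ?thesis using a by simp
  qed
qed

lemma fdist_ge:
  assumes "bdd_above (fd_fun u v ` {0..1})" and "0 \<le> a" "a \<le> 1"
  shows "\<bar>flower u a - flower v a\<bar> \<le> fdist u v \<and> \<bar>fupper u a - fupper v a\<bar> \<le> fdist u v"
proof -
  have "fd_fun u v a \<le> fdist u v" unfolding fdist_alt using assms by (intro cSUP_upper) auto
  then show ?thesis unfolding fd_fun_def by simp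
qed

lemma level0:
  assumes g: "good w" and K: "\<And>a. 0 < a \<Longrightarrow> a \<le> 1 \<Longrightarrow> \<bar>flower w a\<bar> \<le> K \<and> \<bar>fupper w a\<bar> \<le> K"
  shows "\<bar>flower w 0\<bar> \<le> K \<and> \<bar>fupper w 0\<bar> \<le> K"
proof -
  have sub: "{x. 0 < w x} \<subseteq> {-K..K}"
  proof
    fix x assume "x \<in> {x. 0 < w x}"
    then have wx: "0 < w x" by simp
    define a where "a = min (w x) 1"
    have a: "0 < a" "a \<le> 1" "a \<le> w x" using wx unfolding a_def by auto
    then have "x \<in> flevel w a" by (simp add: flevel_pos)
    then have "x \<in> {flower w a..fupper w a}" using goodD[OF g a(1,2)] by simp
    then show "x \<in> {-K..K}" using K[OF a(1,2)] by auto
  qed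
  have "flower w 1 \<in> flevel w 1" using goodD[OF g, of 1] by simp
  then have "flower w 1 \<in> {x. 0 < w x}" by (simp add: flevel_pos)
  then have ne: "closure {x. 0 < w x} \<noteq> {}" using closure_subset by blast
  have csub: "closure {x. 0 < w x} \<subseteq> {-K..K}" using sub by (rule closure_minimal) simp
  have lev: "flevel w 0 = closure {x. 0 < w x}" unfolding flevel_def by simp
  have bb: "bdd_below (closure {x. 0 < w x})" "bdd_above (closure {x. 0 < w x})"
    using csub by (auto intro!: bdd_belowI[of _ "-K"] bdd_aboveI[of _ K])
  obtain z where z: "z \<in> closure {x. 0 < w x}" using ne by (metis equals0I)
  have "-K \<le> Inf (closure {x. 0 < w x})" using csub ne by (intro cInf_greatest) auto
  moreover have "Inf (closure {x. 0 < w x}) \<le> z" using z bb by (intro cInf_lower)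
  moreover have "Sup (closure {x. 0 < w x}) \<le> K" using csub ne by (intro cSup_least) auto
  moreover have "z \<le> Sup (closure {x. 0 < w x})" using z bb by (intro cSup_upper)
  moreover have "-K \<le> z \<and> z \<le> K" using z csub by auto
  ultimately show ?thesis unfolding flower_def fupper_def lev by auto
qed

lemma fdist_zero_le:
  assumes g: "good w" and K: "\<And>a. 0 < a \<Longrightarrow> a \<le> 1 \<Longrightarrow> \<bar>flower w a\<bar> \<le> K \<and> \<bar>fupper w a\<bar> \<le> K"
  shows "fdist w fzero \<le> K"
  unfolding fdist_alt
proof (rule cSUP_least)
  show "{0..1::real} \<noteq> {}" by simp
  fix a :: real assume a: "a \<in> {0..1}"
  have "\<bar>flower w a\<bar> \<le> K \<and> \<bar>fupper w a\<bar> \<le> K"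
    using level0[OF g K] K a by (cases "a = 0") auto
  then show "fd_fun w fzero a \<le> K" using fzero_lu[of a] a unfolding fd_fun_def by simp
qed



lemma fuzzy_bound_dist:
  assumes fu: "fuzzy_number u" and a: "0 < a" "a \<le> 1"
  shows "\<bar>flower u a\<bar> \<le> fdist u fzero \<and> \<bar>fupper u a\<bar> \<le> fdist u fzero"
proof -
  obtain B where B: "\<And>a. 0 < a \<Longrightarrow> a \<le> 1 \<Longrightarrow> \<bar>flower u a\<bar> \<le> B \<and> \<bar>fupper u a\<bar> \<le> B"
    using good_fuzzy[OF fu] by blast
  have "bdd_above (fd_fun u fzero ` {0..1})"
    by (rule bdd_fdist[of _ B _ 0]) (use B fzero_lu in auto)
  from fdist_ge[OF this, of a] a fzero_lu[of a] show ?thesis by simp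
qed

theorem mainTheorem2:
  fixes p :: real and u :: "nat \<Rightarrow> fuzzy" and \<nu> :: fuzzy
  assumes "p > 0"
    and "\<And>n. fuzzy_number (u n)"
    and "fuzzy_number \<nu>"
    and "Ep_summable_series p u \<nu>"
    and "Bseq (\<lambda>n. sqrt (real n) * fdist (u n) fzero)"
  shows "bs_F u"
proof -
  note p = assms(1)
  define d where "d k = fdist (u k) fzero" for k
  define dn where "dn = fdist \<nu> fzero"
  have gu: "good (u k)" for k using good_fuzzy[OF assms(2)] by blast
  have bu: "\<bar>flower (u k) a\<bar> \<le> d k \<and> \<bar>fupper (u k) a\<bar> \<le> d k" if "0 < a" "a \<le> 1" for k a
    unfolding d_def using fuzzy_bound_dist[OF assms(2) that] .
  have d0: "d k \<ge> 0" for k using bu[of 1 k] by linarith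
  have bn: "\<bar>flower \<nu> a\<bar> \<le> dn \<and> \<bar>fupper \<nu> a\<bar> \<le> dn" if "0 < a" "a \<le> 1" for a
    unfolding dn_def using fuzzy_bound_dist[OF assms(3) that] .
  define s where "s = fsum u"
  have gs: "good (s k) \<and> (\<forall>a. 0 < a \<and> a \<le> 1 \<longrightarrow> flower (s k) a = (\<Sum>j\<le>k. flower (u j) a) \<and> fupper (s k) a = (\<Sum>j\<le>k. fupper (u j) a))" for k
    unfolding s_def using good_fsum[OF gu] .
  define Ds where "Ds k = (\<Sum>j\<le>k. d j)" for k
  have bs: "\<bar>flower (s k) a\<bar> \<le> Ds k \<and> \<bar>fupper (s k) a\<bar> \<le> Ds k" if a: "0 < a" "a \<le> 1" for k a
  proof -
    have "\<bar>\<Sum>j\<le>k. flower (u j) a\<bar> \<le> Ds k" unfolding Ds_def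
      by (rule order_trans[OF sum_abs sum_mono]) (use bu[OF a] in blast)
    moreover have "\<bar>\<Sum>j\<le>k. fupper (u j) a\<bar> \<le> Ds k" unfolding Ds_def
      by (rule order_trans[OF sum_abs sum_mono]) (use bu[OF a] in blast)
    ultimately show ?thesis using gs[of k] a by simp
  qed
  define c where "c n k = real (n choose k) * p ^ (n - k) / (p + 1) ^ n" for n k
  define t where "t n = euler_mean p s n" for n
  have cpos: "c n k > 0" if "k \<le> n" for n k unfolding c_def using p that by simp
  have gt: "good (t n) \<and> (\<forall>a. 0 < a \<and> a \<le> 1 \<longrightarrow> flower (t n) a = (\<Sum>k\<le>n. c n k * flower (s k) a) \<and> fupper (t n) a = (\<Sum>k\<le>n. c n k * fupper (s k) a))" for n
  proof -
    have tn: "t n = fsum (\<lambda>k. fscale (c n k) (s k)) n" unfolding t_def euler_mean_def c_def ..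
    have "good (fscale (c n k) (s k)) \<and> (\<forall>a. 0 < a \<and> a \<le> 1 \<longrightarrow> flower (fscale (c n k) (s k)) a = c n k * flower (s k) a \<and> fupper (fscale (c n k) (s k)) a = c n k * fupper (s k) a)" if "k \<le> n" for k
      using good_fscale[OF conjunct1[OF gs] cpos[OF that]] .
    then show ?thesis unfolding tn using good_fsum[of n "\<lambda>k. fscale (c n k) (s k)"] by simp
  qed
  define Dt where "Dt n = (\<Sum>k\<le>n. c n k * Ds k)" for n
  have bt: "\<bar>flower (t n) a\<bar> \<le> Dt n \<and> \<bar>fupper (t n) a\<bar> \<le> Dt n" if a: "0 < a" "a \<le> 1" for n a
  proof -
    have "\<bar>\<Sum>k\<le>n. c n k * flower (s k) a\<bar> \<le> Dt n" unfolding Dt_def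
    proof (rule order_trans[OF sum_abs sum_mono])
      fix k assume "k \<in> {..n}"
      then show "\<bar>c n k * flower (s k) a\<bar> \<le> c n k * Ds k"
        using cpos[of k n] bs[OF a, of k] by (simp add: abs_mult mult_left_mono)
    qed
    moreover have "\<bar>\<Sum>k\<le>n. c n k * fupper (s k) a\<bar> \<le> Dt n" unfolding Dt_def
    proof (rule order_trans[OF sum_abs sum_mono])
      fix k assume "k \<in> {..n}"
      then show "\<bar>c n k * fupper (s k) a\<bar> \<le> c n k * Ds k"
        using cpos[of k n] bs[OF a, of k] by (simp add: abs_mult mult_left_mono)
    qed
    ultimately show ?thesis using gt[of n] a by simp
  qed
  have tnu: "\<bar>flower (t n) a - flower \<nu> a\<bar> \<le> fdist (t n) \<nu> \<and> \<bar>fupper (t n) a - fupper \<nu> a\<bar> \<le> fdist (t n) \<nu>"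
    if a: "0 < a" "a \<le> 1" for n a
  proof -
    have "bdd_above (fd_fun (t n) \<nu> ` {0..1})" by (rule bdd_fdist[of _ "Dt n" _ dn]) (use bt bn in auto)
    from fdist_ge[OF this, of a] a show ?thesis by simp
  qed
  have lim: "(\<lambda>n. fdist (t n) \<nu>) \<longlonglongrightarrow> 0"
    using assms(4) unfolding Ep_summable_series_def Ep_summable_seq_def t_def s_def .
  obtain N where N: "\<And>n. n \<ge> N \<Longrightarrow> norm (fdist (t n) \<nu> - 0) < 1"
    using LIMSEQ_D[OF lim, of 1] by auto
  obtain K where K: "K > 0" "\<And>n. norm (sqrt (real n) * fdist (u n) fzero) \<le> K"
    using assms(5) unfolding Bseq_def by blast
  have dk: "d k \<le> K / sqrt (real k)" if "k \<ge> 1" for k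
  proof -
    have "sqrt (real k) * d k \<le> K" using K(2)[of k] d0[of k] unfolding d_def by simp
    moreover have "sqrt (real k) > 0" using that by simp
    ultimately show ?thesis by (simp add: field_simps mult.commute)
  qed
  define Kf where "Kf = (dn + 1) + 3 * K + d 0 + 2 * K * real N"
  have main: "\<bar>flower (s m) a\<bar> \<le> Kf \<and> \<bar>fupper (s m) a\<bar> \<le> Kf" if a: "0 < a" "a \<le> 1" for m a
  proof -
    have T1: "\<bar>\<Sum>k\<le>n. real (n choose k) * p^(n-k) / (p+1)^n * (\<Sum>j\<le>k. flower (u j) a)\<bar> \<le> dn + 1" if "n \<ge> N" for n
    proof -
      have "(\<Sum>k\<le>n. real (n choose k) * p^(n-k) / (p+1)^n * (\<Sum>j\<le>k. flower (u j) a)) = flower (t n) a"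
        using gt[of n] gs a unfolding c_def by simp
      moreover have "fdist (t n) \<nu> < 1" using N[OF that] by simp
      ultimately show ?thesis using tnu[OF a, of n] bn[OF a] by linarith
    qed
    have T2: "\<bar>\<Sum>k\<le>n. real (n choose k) * p^(n-k) / (p+1)^n * (\<Sum>j\<le>k. fupper (u j) a)\<bar> \<le> dn + 1" if "n \<ge> N" for n
    proof -
      have "(\<Sum>k\<le>n. real (n choose k) * p^(n-k) / (p+1)^n * (\<Sum>j\<le>k. fupper (u j) a)) = fupper (t n) a"
        using gt[of n] gs a unfolding c_def by simp
      moreover have "fdist (t n) \<nu> < 1" using N[OF that] by simp
      ultimately show ?thesis using tnu[OF a, of n] bn[OF a] by linarith
    qed
    have xk1: "\<bar>flower (u k) a\<bar> \<le> K / sqrt (real k)" if "1 \<le> k" for k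
      using bu[OF a, of k] dk[OF that] by linarith
    have xk2: "\<bar>fupper (u k) a\<bar> \<le> K / sqrt (real k)" if "1 \<le> k" for k
      using bu[OF a, of k] dk[OF that] by linarith
    have x01: "\<bar>flower (u 0) a\<bar> \<le> d 0" and x02: "\<bar>fupper (u 0) a\<bar> \<le> d 0" using bu[OF a, of 0] by auto
    have r1: "\<bar>\<Sum>j\<le>m. flower (u j) a\<bar> \<le> Kf" unfolding Kf_def
      by (rule real_core[OF p less_imp_le[OF K(1)] xk1 x01 T1])
    have r2: "\<bar>\<Sum>j\<le>m. fupper (u j) a\<bar> \<le> Kf" unfolding Kf_def
      by (rule real_core[OF p less_imp_le[OF K(1)] xk2 x02 T2])
    show ?thesis using r1 r2 gs[of m] a by simp
  qed
  have "fdist (s m) fzero \<le> Kf" for m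
    using fdist_zero_le[OF conjunct1[OF gs[of m]]] main by blast
  moreover have "Kf > 0"
  proof -
    have "0 \<le> 2 * K * real N" using K(1) by simp
    moreover have "0 \<le> dn" using bn[of 1] by linarith
    ultimately show ?thesis unfolding Kf_def using K(1) d0[of 0] by linarith
  qed
  ultimately show ?thesis unfolding bs_F_def s_def
    by (intro exI[of _ "Kf + 1"]) (smt (verit))
qed

end
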